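(* Let $P_n$ be a labeled path whose ribbon diagram $RT(P_n)$ has at least two columns and every column of $RT(P_n)$ contains at least $2$ boxes (equivalently, the ribbon diagram of the path $f(P_n)$ with labeling $(n+1-\sigma_1)\cdots(n+1-\sigma_n)$ has composition $(\alpha_1,\dots,\alpha_k)$ with $k\ge2$ and all $\alpha_i\ge 2$). Then $X(P_n;\mathbf{x},q)$ is not symmetric.
   Context: A labeled path $P_n$ is the path graph with vertices $v_1,\dots,v_n$ (edges $v_iv_{i+1}$) where $v_i$ carries label $\sigma_i$ for a permutation $\sigma$ of $[n]$; vertices are identified with labels. A proper coloring is $c\colon[n]\to\{1,2,\dots\}$ with adjacent vertices colored differently; $\operatorname{asc}(c)=\#\{ij\in E: i<j,\ c(i)<c(j)\}$. The CQF is $X(P_n;\mathbf{x},q)=\sum_{c \text{ proper}} x_{c(1)}\cdots x_{c(n)}q^{\operatorname{asc}(c)}$; it is symmetric if each coefficient of $q^k$ is a symmetric function. The ad-pattern of $P_n$ is $w_1\cdots w_{n-1}$ with $w_i=a$ if $\sigma_i<\sigma_{i+1}$ and $w_i=d$ otherwise. The ribbon diagram $RT(P_n)$: start with box $1$, and for $i=1,\dots,n-1$ place box $i+1$ immediately right of box $i$ if $w_i=a$ and immediately above box $i$ if $w_i=d$. Its composition lists the number of boxes in each row from the bottom row up; a column is the set of boxes sharing the same horizontal position. *)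

theory Defs
  imports Main
begin

(* A labeled path P_n is given by a permutation sigma of {1..n}:
   vertex v_i carries label sigma i, vertices are identified with labels,
   edges are {sigma i, sigma (i+1)} for 1 <= i < n. *)
definition labeled_path :: "nat \<Rightarrow> (nat \<Rightarrow> nat) \<Rightarrow> bool" where
  "labeled_path n \<sigma> \<longleftrightarrow> bij_betw \<sigma> {1..n} {1..n}"

definition proper_coloring :: "nat \<Rightarrow> (nat \<Rightarrow> nat) \<Rightarrow> (nat \<Rightarrow> nat) \<Rightarrow> bool" where
  "proper_coloring n \<sigma> c \<longleftrightarrow>
     (\<forall>i\<in>{1..n}. c i \<ge> 1) \<and> (\<forall>i. i \<notin> {1..n} \<longrightarrow> c i = 0) \<and>
     (\<forall>i. 1 \<le> i \<and> i < n \<longrightarrow> c (\<sigma> i) \<noteq> c (\<sigma> (Suc i)))"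

definition asc :: "nat \<Rightarrow> (nat \<Rightarrow> nat) \<Rightarrow> (nat \<Rightarrow> nat) \<Rightarrow> nat" where
  "asc n \<sigma> c = card {i. 1 \<le> i \<and> i < n \<and>
      ((\<sigma> i < \<sigma> (Suc i) \<and> c (\<sigma> i) < c (\<sigma> (Suc i))) \<or>
       (\<sigma> (Suc i) < \<sigma> i \<and> c (\<sigma> (Suc i)) < c (\<sigma> i)))}"

(* Coefficient of q^k x_1^{a 1} x_2^{a 2} ... in X(P_n; x, q):
   number of proper colorings with asc = k whose color multiplicities are a
   (a 0 is irrelevant since colors are positive). *)
definition cqf_coeff :: "nat \<Rightarrow> (nat \<Rightarrow> nat) \<Rightarrow> nat \<Rightarrow> (nat \<Rightarrow> nat) \<Rightarrow> nat" where
  "cqf_coeff n \<sigma> k a = card {c. proper_coloring n \<sigma> c \<and> asc n \<sigma> c = k \<and>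
      (\<forall>j\<ge>1. card {i\<in>{1..n}. c i = j} = a j)}"

definition cqf_symmetric :: "nat \<Rightarrow> (nat \<Rightarrow> nat) \<Rightarrow> bool" where
  "cqf_symmetric n \<sigma> \<longleftrightarrow>
     (\<forall>k a \<pi>. bij_betw \<pi> {1..} {1..} \<longrightarrow>
        cqf_coeff n \<sigma> k (\<lambda>j. a (\<pi> j)) = cqf_coeff n \<sigma> k a)"

(* ribbon diagram: box i (1 <= i <= n) sits at (column, row) where the column
   is the number of ascents w_j = a with j < i and the row the number of descents. *)
definition ribbon_pos :: "(nat \<Rightarrow> nat) \<Rightarrow> nat \<Rightarrow> nat \<times> nat" where
  "ribbon_pos \<sigma> i =
     (card {j. 1 \<le> j \<and> j < i \<and> \<sigma> j < \<sigma> (Suc j)},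
      card {j. 1 \<le> j \<and> j < i \<and> \<not> \<sigma> j < \<sigma> (Suc j)})"

definition ribbon_columns :: "nat \<Rightarrow> (nat \<Rightarrow> nat) \<Rightarrow> nat set" where
  "ribbon_columns n \<sigma> = (\<lambda>i. fst (ribbon_pos \<sigma> i)) ` {1..n}"

definition column_boxes :: "nat \<Rightarrow> (nat \<Rightarrow> nat) \<Rightarrow> nat \<Rightarrow> nat set" where
  "column_boxes n \<sigma> x = {i\<in>{1..n}. fst (ribbon_pos \<sigma> i) = x}"

end

theory Submission
  imports Defs
begin


lemma t1:
  assumes bij: "bij_betw \<sigma> {1..n} {1..n}" and x: "x \<in> {1..n}"
  shows "the_inv_into {1..n} \<sigma> x \<in> {1..n} \<and> \<sigma> (the_inv_into {1..n} \<sigma> x) = x"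
proof -
  have "bij_betw (the_inv_into {1..n} \<sigma>) {1..n} {1..n}" using bij by (rule bij_betw_the_inv_into)
  hence "the_inv_into {1..n} \<sigma> x \<in> {1..n}" using x by (meson bij_betwE)
  moreover have "\<sigma> (the_inv_into {1..n} \<sigma> x) = x"
    using bij x by (intro f_the_inv_into_f) (auto simp: bij_betw_def)
  ultimately show ?thesis by blast
qed

lemma t2:
  assumes bij: "bij_betw \<sigma> {1..n} {1..n}" and "i \<in> {1..n}"
  shows "the_inv_into {1..n} \<sigma> (\<sigma> i) = i"
  using assms by (intro the_inv_into_f_f) (auto simp: bij_betw_def)

definition pos_ok :: "nat \<Rightarrow> (nat \<Rightarrow> nat) \<Rightarrow> bool" where
  "pos_ok n d \<longleftrightarrow> (\<forall>i\<in>{1..n}. d i \<ge> 1) \<and> (\<forall>i. i \<notin> {1..n} \<longrightarrow> d i = 0) \<and>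
     (\<forall>i. 1 \<le> i \<and> i < n \<longrightarrow> d i \<noteq> d (Suc i))"

definition pasc :: "nat \<Rightarrow> (nat \<Rightarrow> nat) \<Rightarrow> (nat \<Rightarrow> nat) \<Rightarrow> nat" where
  "pasc n \<sigma> d = card {i. 1 \<le> i \<and> i < n \<and>
      ((\<sigma> i < \<sigma> (Suc i) \<and> d i < d (Suc i)) \<or> (\<sigma> (Suc i) < \<sigma> i \<and> d (Suc i) < d i))}"

definition pmult :: "nat \<Rightarrow> (nat \<Rightarrow> nat) \<Rightarrow> nat \<Rightarrow> nat" where
  "pmult n d j = card {i\<in>{1..n}. d i = j}"

definition DS :: "nat \<Rightarrow> (nat \<Rightarrow> nat) \<Rightarrow> nat \<Rightarrow> (nat \<Rightarrow> nat) \<Rightarrow> (nat \<Rightarrow> nat) set" where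
  "DS n \<sigma> k a = {d. pos_ok n d \<and> pasc n \<sigma> d = k \<and> (\<forall>j\<ge>1. pmult n d j = a j)}"

lemma transfer:
  assumes bij: "bij_betw \<sigma> {1..n} {1..n}"
  shows "cqf_coeff n \<sigma> k a = card (DS n \<sigma> k a)"
proof -
  define \<Psi> where "\<Psi> = (\<lambda>c::nat\<Rightarrow>nat. \<lambda>i. if i \<in> {1..n} then c (\<sigma> i) else 0)"
  define \<tau> where "\<tau> = the_inv_into {1..n} \<sigma>"
  define \<Phi> where "\<Phi> = (\<lambda>d::nat\<Rightarrow>nat. \<lambda>x. if x \<in> {1..n} then d (\<tau> x) else 0)"
  have inj: "inj_on \<sigma> {1..n}" using bij by (rule bij_betw_imp_inj_on)
  have img: "\<sigma> ` {1..n} = {1..n}" using bij by (rule bij_betw_imp_surj_on)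
  have tau1: "\<And>x. x \<in> {1..n} \<Longrightarrow> \<tau> x \<in> {1..n} \<and> \<sigma> (\<tau> x) = x"
    unfolding \<tau>_def using bij by (rule t1)
  have tau2: "\<And>i. i \<in> {1..n} \<Longrightarrow> \<tau> (\<sigma> i) = i"
    unfolding \<tau>_def using bij by (rule t2)
  have sig: "\<And>i. i \<in> {1..n} \<Longrightarrow> \<sigma> i \<in> {1..n}" using img by blast
  have mult: "card {x\<in>{1..n}. c x = j} = card {i\<in>{1..n}. c (\<sigma> i) = j}" for c :: "nat \<Rightarrow> nat" and j
  proof -
    have "{x\<in>{1..n}. c x = j} = \<sigma> ` {i\<in>{1..n}. c (\<sigma> i) = j}"
    proof
      show "\<sigma> ` {i\<in>{1..n}. c (\<sigma> i) = j} \<subseteq> {x\<in>{1..n}. c x = j}" using sig by auto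
      show "{x\<in>{1..n}. c x = j} \<subseteq> \<sigma> ` {i\<in>{1..n}. c (\<sigma> i) = j}"
      proof
        fix x assume x: "x \<in> {x\<in>{1..n}. c x = j}"
        hence "\<tau> x \<in> {i\<in>{1..n}. c (\<sigma> i) = j}" using tau1[of x] by auto
        moreover have "x = \<sigma> (\<tau> x)" using tau1[of x] x by auto
        ultimately show "x \<in> \<sigma> ` {i\<in>{1..n}. c (\<sigma> i) = j}" by blast
      qed
    qed
    moreover have "inj_on \<sigma> {i\<in>{1..n}. c (\<sigma> i) = j}" using inj by (rule inj_on_subset) auto
    ultimately show ?thesis by (simp add: card_image)
  qed
  let ?C = "{c. proper_coloring n \<sigma> c \<and> asc n \<sigma> c = k \<and> (\<forall>j\<ge>1. card {i\<in>{1..n}. c i = j} = a j)}"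
  have "bij_betw \<Psi> ?C (DS n \<sigma> k a)"
  proof (rule bij_betw_byWitness[where f' = \<Phi>])
    show "\<forall>c\<in>?C. \<Phi> (\<Psi> c) = c"
    proof
      fix c assume "c \<in> ?C"
      hence out: "\<And>i. i \<notin> {1..n} \<Longrightarrow> c i = 0" by (auto simp: proper_coloring_def)
      show "\<Phi> (\<Psi> c) = c"
      proof
        fix x show "\<Phi> (\<Psi> c) x = c x"
        proof (cases "x \<in> {1..n}")
          case True thus ?thesis using tau1[OF True] by (simp add: \<Phi>_def \<Psi>_def)
        next
          case False thus ?thesis unfolding \<Phi>_def using out[OF False] by auto
        qed
      qed
    qed
    show "\<forall>d\<in>DS n \<sigma> k a. \<Psi> (\<Phi> d) = d"
    proof
      fix d assume "d \<in> DS n \<sigma> k a"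
      hence out: "\<And>i. i \<notin> {1..n} \<Longrightarrow> d i = 0" by (auto simp: DS_def pos_ok_def)
      show "\<Psi> (\<Phi> d) = d"
      proof
        fix i show "\<Psi> (\<Phi> d) i = d i"
        proof (cases "i \<in> {1..n}")
          case True thus ?thesis using tau2[OF True] sig[OF True] by (simp add: \<Phi>_def \<Psi>_def)
        next
          case False thus ?thesis unfolding \<Psi>_def using out[OF False] by auto
        qed
      qed
    qed
    show "\<Psi> ` ?C \<subseteq> DS n \<sigma> k a"
    proof
      fix d assume "d \<in> \<Psi> ` ?C"
      then obtain c where c: "c \<in> ?C" and d: "d = \<Psi> c" by blast
      have pc: "proper_coloring n \<sigma> c" using c by auto
      have "pos_ok n d"
        using pc sig unfolding pos_ok_def proper_coloring_def d \<Psi>_def by auto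
      moreover have "pasc n \<sigma> d = asc n \<sigma> c"
        unfolding pasc_def asc_def d \<Psi>_def
        by (rule arg_cong[where f = card]) auto
      moreover have "pmult n d j = card {i\<in>{1..n}. c i = j}" for j
        unfolding pmult_def d \<Psi>_def mult[of c j]
        by (rule arg_cong[where f = card]) auto
      ultimately show "d \<in> DS n \<sigma> k a" using c by (auto simp: DS_def)
    qed
    show "\<Phi> ` DS n \<sigma> k a \<subseteq> ?C"
    proof
      fix c assume "c \<in> \<Phi> ` DS n \<sigma> k a"
      then obtain d where dD: "d \<in> DS n \<sigma> k a" and c: "c = \<Phi> d" by blast
      have po: "pos_ok n d" using dD by (auto simp: DS_def)
      have cs: "\<And>i. i \<in> {1..n} \<Longrightarrow> c (\<sigma> i) = d i" unfolding c \<Phi>_def using sig tau2 by auto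
      have "proper_coloring n \<sigma> c"
        unfolding proper_coloring_def
      proof (intro conjI allI impI ballI)
        fix i assume "i \<in> {1..n}" thus "1 \<le> c i" using po tau1 unfolding c \<Phi>_def pos_ok_def by auto
      next
        fix i assume "i \<notin> {1..n}" thus "c i = 0" unfolding c \<Phi>_def by auto
      next
        fix i assume "1 \<le> i \<and> i < n"
        thus "c (\<sigma> i) \<noteq> c (\<sigma> (Suc i))" using po cs[of i] cs[of "Suc i"] unfolding pos_ok_def by auto
      qed
      moreover have "asc n \<sigma> c = pasc n \<sigma> d"
        unfolding pasc_def asc_def
        by (rule arg_cong[where f = card]) (auto simp: cs)
      moreover have "card {i\<in>{1..n}. c i = j} = pmult n d j" for j
        unfolding pmult_def mult[of c j]
        by (rule arg_cong[where f = card]) (auto simp: cs)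
      ultimately show "c \<in> ?C" using dD by (auto simp: DS_def)
    qed
  qed
  hence "card ?C = card (DS n \<sigma> k a)" by (rule bij_betw_same_card)
  thus ?thesis by (simp add: cqf_coeff_def)
qed



definition bb :: "(nat \<Rightarrow> nat) \<Rightarrow> nat \<Rightarrow> bool" where
  "bb \<sigma> i \<longleftrightarrow> (if odd i then \<sigma> i < \<sigma> (Suc i) else \<sigma> (Suc i) < \<sigma> i)"

definition ff :: "(nat \<Rightarrow> nat) \<Rightarrow> nat \<Rightarrow> bool" where
  "ff d i \<longleftrightarrow> (if odd i then d i < d (Suc i) else d (Suc i) < d i)"

definition AA :: "nat \<Rightarrow> (nat \<Rightarrow> nat) \<Rightarrow> nat" where
  "AA n \<sigma> = card {i. 1 \<le> i \<and> i < n \<and> bb \<sigma> i}"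

definition NE :: "nat \<Rightarrow> (nat \<Rightarrow> nat) \<Rightarrow> nat set" where
  "NE n d = {i. 1 \<le> i \<and> i < n \<and> \<not> ff d i}"

lemma pasc_NE:
  assumes inj: "inj_on \<sigma> {1..n}" and po: "pos_ok n d"
  shows "pasc n \<sigma> d + 2 * card {i\<in>NE n d. bb \<sigma> i} = AA n \<sigma> + card (NE n d)"
proof -
  let ?I = "{i. 1 \<le> i \<and> i < n}"
  have agr: "((\<sigma> i < \<sigma> (Suc i) \<and> d i < d (Suc i)) \<or> (\<sigma> (Suc i) < \<sigma> i \<and> d (Suc i) < d i))
      \<longleftrightarrow> (bb \<sigma> i \<longleftrightarrow> ff d i)" if i: "1 \<le> i" "i < n" for i
  proof -
    have "\<sigma> i \<noteq> \<sigma> (Suc i)" using inj i by (auto dest: inj_onD)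
    moreover have "d i \<noteq> d (Suc i)" using po i by (auto simp: pos_ok_def)
    ultimately show ?thesis unfolding bb_def ff_def by (cases "odd i") auto
  qed
  have P: "pasc n \<sigma> d = card {i\<in>?I. bb \<sigma> i = ff d i}"
    unfolding pasc_def
  proof (rule arg_cong[where f=card], rule Collect_cong)
    fix i show "(1 \<le> i \<and> i < n \<and> ((\<sigma> i < \<sigma> (Suc i) \<and> d i < d (Suc i)) \<or> (\<sigma> (Suc i) < \<sigma> i \<and> d (Suc i) < d i)))
      \<longleftrightarrow> (i \<in> ?I \<and> bb \<sigma> i = ff d i)" using agr[of i] by auto
  qed
  have fin: "finite ?I" by (rule finite_subset[of _ "{..<n}"]) auto
  have e1: "{i\<in>?I. bb \<sigma> i = ff d i} = {i\<in>?I. ff d i \<and> bb \<sigma> i} \<union> {i\<in>?I. \<not> ff d i \<and> \<not> bb \<sigma> i}" by auto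
  have e2: "{i. 1 \<le> i \<and> i < n \<and> bb \<sigma> i} = {i\<in>?I. ff d i \<and> bb \<sigma> i} \<union> {i\<in>?I. \<not> ff d i \<and> bb \<sigma> i}" by auto
  have e3: "NE n d = {i\<in>?I. \<not> ff d i \<and> bb \<sigma> i} \<union> {i\<in>?I. \<not> ff d i \<and> \<not> bb \<sigma> i}" by (auto simp: NE_def)
  have e4: "{i\<in>NE n d. bb \<sigma> i} = {i\<in>?I. \<not> ff d i \<and> bb \<sigma> i}" by (auto simp: NE_def)
  have c1: "card {i\<in>?I. bb \<sigma> i = ff d i} = card {i\<in>?I. ff d i \<and> bb \<sigma> i} + card {i\<in>?I. \<not> ff d i \<and> \<not> bb \<sigma> i}"
    unfolding e1 by (rule card_Un_disjoint) (auto intro: finite_subset[OF _ fin])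
  have c2: "AA n \<sigma> = card {i\<in>?I. ff d i \<and> bb \<sigma> i} + card {i\<in>?I. \<not> ff d i \<and> bb \<sigma> i}"
    unfolding AA_def e2 by (rule card_Un_disjoint) (auto intro: finite_subset[OF _ fin])
  have c3: "card (NE n d) = card {i\<in>?I. \<not> ff d i \<and> bb \<sigma> i} + card {i\<in>?I. \<not> ff d i \<and> \<not> bb \<sigma> i}"
    unfolding e3 by (rule card_Un_disjoint) (auto intro: finite_subset[OF _ fin])
  show ?thesis using P c1 c2 c3 e4 by simp
qed

lemma pasc_eq_AA:
  assumes inj: "inj_on \<sigma> {1..n}" and po: "pos_ok n d" and eq: "pasc n \<sigma> d = AA n \<sigma>"
  shows "card (NE n d) = 2 * card {i\<in>NE n d. bb \<sigma> i}"
  using pasc_NE[OF inj po] eq by simp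

lemma pasc_eq_AA_iff:
  assumes inj: "inj_on \<sigma> {1..n}" and po: "pos_ok n d"
  shows "pasc n \<sigma> d = AA n \<sigma> \<longleftrightarrow> card (NE n d) = 2 * card {i\<in>NE n d. bb \<sigma> i}"
  using pasc_NE[OF inj po] by auto



definition ST :: "nat \<Rightarrow> nat \<Rightarrow> nat set" where
  "ST n t = {i. 1 \<le> i \<and> i \<le> n \<and> (odd i \<and> i < 2*t \<or> even i \<and> 2*t+1 < i)}"

definition indep :: "nat set \<Rightarrow> bool" where
  "indep S \<longleftrightarrow> (\<forall>i. i \<in> S \<longrightarrow> Suc i \<notin> S)"

lemma card_le1: "S \<subseteq> {x} \<Longrightarrow> card S \<le> 1"
  using card_mono[of "{x}" S] by simp

lemma indep_card_le:
  "S \<subseteq> {1..n} \<Longrightarrow> indep S \<Longrightarrow> card S \<le> (n+1) div 2"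
proof (induction n arbitrary: S rule: less_induct)
  case (less n)
  show ?case
  proof (cases "n < 2")
    case True
    hence "S \<subseteq> {1}" using less.prems(1) by auto
    hence "card S \<le> 1" by (rule card_le1)
    moreover have "n = 0 \<Longrightarrow> S = {}" using less.prems(1) by auto
    ultimately show ?thesis using True by (cases "n = 0") auto
  next
    case False
    define k where "k = n - 2"
    have k: "n = k + 2" using False by (simp add: k_def)
    let ?S' = "S \<inter> {1..k}"
    have fin: "finite S" using less.prems(1) finite_subset by blast
    have "k < n" using k by simp
    moreover have "?S' \<subseteq> {1..k}" by auto
    moreover have "indep ?S'" using less.prems(2) unfolding indep_def by auto
    ultimately have c1: "card ?S' \<le> (k+1) div 2" by (rule less.IH)
    have eq: "S = ?S' \<union> (S \<inter> {k+1,k+2})" using less.prems(1) k by auto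
    have c2: "card (S \<inter> {k+1,k+2}) \<le> 1"
    proof -
      have "\<not> (k+1 \<in> S \<and> k+2 \<in> S)" using less.prems(2) unfolding indep_def by auto
      hence "S \<inter> {k+1,k+2} \<subseteq> {k+1} \<or> S \<inter> {k+1,k+2} \<subseteq> {k+2}" by blast
      thus ?thesis by (elim disjE) (erule card_le1)+
    qed
    have "card S \<le> card ?S' + card (S \<inter> {k+1,k+2})"
      by (subst eq) (rule card_Un_le)
    thus ?thesis using c1 c2 k by simp
  qed
qed


lemma ST_step_odd: "odd k \<Longrightarrow> 2*t = k+1 \<Longrightarrow> ST (k+2) (t+1) = ST k t \<union> {k+2}"
  unfolding ST_def by (rule set_eqI) (simp; presburger)

lemma ST_step_even: "even k \<Longrightarrow> 2*t \<le> k \<Longrightarrow> ST (k+2) t = ST k t \<union> {k+2}"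
  unfolding ST_def by (rule set_eqI) (simp; presburger)

lemma ST_step_even2: "even k \<Longrightarrow> ST (k+2) (k div 2 + 1) = ST k (k div 2) \<union> {k+1}"
  unfolding ST_def by (rule set_eqI) (simp; presburger)

lemma ST_sub: "ST n t \<subseteq> {1..n}" unfolding ST_def by auto


lemma indep_class:
  "S \<subseteq> {1..n} \<Longrightarrow> indep S \<Longrightarrow> card S = (n+1) div 2 \<Longrightarrow>
   \<exists>t. t \<le> (n+1) div 2 \<and> (odd n \<longrightarrow> t = (n+1) div 2) \<and> S = ST n t"
proof (induction n arbitrary: S rule: less_induct)
  case (less n)
  have fin: "finite S" using less.prems(1) finite_subset by blast
  show ?case
  proof (cases "n < 2")
    case True
    show ?thesis
    proof (cases "n = 0")
      case True
      hence "S = {}" using less.prems(1) by auto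
      moreover have "ST 0 0 = {}" unfolding ST_def by auto
      ultimately show ?thesis using True by auto
    next
      case False
      hence n1: "n = 1" using \<open>n < 2\<close> by simp
      hence "S \<subseteq> {1}" using less.prems(1) by auto
      moreover have "card S = 1" using less.prems(3) n1 by simp
      ultimately have "S = {1}" by (metis card_1_singletonE subset_singletonD singleton_insert_inj_eq' insert_not_empty)
      moreover have "ST 1 1 = {1}" unfolding ST_def by auto
      ultimately show ?thesis using n1 by (intro exI[of _ 1]) auto
    qed
  next
    case False
    define k where "k = n - 2"
    have k: "n = k + 2" using False by (simp add: k_def)
    let ?S' = "S \<inter> {1..k}"
    let ?T = "S \<inter> {k+1,k+2}"
    have "?S' \<subseteq> {1..k}" by auto
    moreover have ind': "indep ?S'" using less.prems(2) unfolding indep_def by auto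
    ultimately have c1: "card ?S' \<le> (k+1) div 2" by (rule indep_card_le)
    have eq: "S = ?S' \<union> ?T" using less.prems(1) k by auto
    have notboth: "\<not> (k+1 \<in> S \<and> k+2 \<in> S)" using less.prems(2) unfolding indep_def by auto
    have c2: "card ?T \<le> 1"
    proof -
      have "?T \<subseteq> {k+1} \<or> ?T \<subseteq> {k+2}" using notboth by blast
      thus ?thesis by (elim disjE) (erule card_le1)+
    qed
    have "card S = card ?S' + card ?T"
      by (subst eq) (rule card_Un_disjoint, auto intro: finite_subset[OF _ fin])
    moreover have "(k+2+1) div 2 = (k+1) div 2 + 1" by simp
    ultimately have cS': "card ?S' = (k+1) div 2" and cT: "card ?T = 1"
      using c1 c2 less.prems(3) k by linarith+
    have "\<exists>t. t \<le> (k+1) div 2 \<and> (odd k \<longrightarrow> t = (k+1) div 2) \<and> ?S' = ST k t"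
      using less.IH[of k ?S'] k \<open>?S' \<subseteq> {1..k}\<close> ind' cS' by simp
    then obtain t where t: "t \<le> (k+1) div 2" "odd k \<longrightarrow> t = (k+1) div 2" "?S' = ST k t" by blast
    have "?T \<noteq> {}"
    proof
      assume "?T = {}" hence "card ?T = 0" by (simp only: card.empty)
      thus False using cT by simp
    qed
    hence "k+1 \<in> S \<or> k+2 \<in> S" by blast
    thus ?thesis
    proof (elim disjE)
      assume a: "k+2 \<in> S"
      hence "k+1 \<notin> S" using notboth by blast
      hence SE: "S = ST k t \<union> {k+2}" using eq t(3) a by auto
      show ?thesis
      proof (cases "odd k")
        case True
        hence "2*t = k+1" using t(2) by simp
        hence "S = ST (k+2) (t+1)" using SE ST_step_odd[OF True] by simp
        thus ?thesis using k True t(2) by (intro exI[of _ "t+1"]) simp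
      next
        case False
        hence "2*t \<le> k" using t(1) by presburger
        hence "S = ST (k+2) t" using SE ST_step_even False by simp
        thus ?thesis using k False t(1) by (intro exI[of _ t]) simp
      qed
    next
      assume a: "k+1 \<in> S"
      hence a2: "k+2 \<notin> S" using notboth by blast
      have nk: "k \<notin> S" using a less.prems(2) unfolding indep_def by auto
      show ?thesis
      proof (cases "odd k")
        case True
        hence "k \<in> ST k t" using t(2) unfolding ST_def by (auto simp: odd_pos Suc_le_eq)
        hence "k \<in> S" using t(3) by auto
        thus ?thesis using nk by blast
      next
        case False
        have "ST k t = ST k (k div 2)"
        proof (cases "k = 0")
          case True thus ?thesis unfolding ST_def by auto
        next
          case k0: False
          have "k \<notin> ST k t" using nk t(3) by auto
          hence "\<not> (2*t+1 < k)" using False k0 unfolding ST_def by auto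
          hence "t = k div 2" using t(1) False by presburger
          thus ?thesis by simp
        qed
        hence "S = ST k (k div 2) \<union> {k+1}" using eq t(3) a a2 by auto
        hence "S = ST (k+2) (k div 2 + 1)" using ST_step_even2 False by simp
        thus ?thesis using k False by (intro exI[of _ "k div 2 + 1"]) auto
      qed
    qed
  qed
qed



definition cnt :: "(nat \<Rightarrow> nat) \<Rightarrow> nat \<Rightarrow> nat" where
  "cnt \<sigma> i = card {j. 1 \<le> j \<and> j < i \<and> \<sigma> j < \<sigma> (Suc j)}"

lemma cnt_fst: "fst (ribbon_pos \<sigma> i) = cnt \<sigma> i"
  by (simp add: ribbon_pos_def cnt_def)

lemma cnt_mono: "i \<le> i' \<Longrightarrow> cnt \<sigma> i \<le> cnt \<sigma> i'"
  unfolding cnt_def by (rule card_mono) (auto intro: finite_subset[of _ "{..<i'}"])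

lemma cnt_Suc_asc: "1 \<le> i \<Longrightarrow> \<sigma> i < \<sigma> (Suc i) \<Longrightarrow> cnt \<sigma> (Suc i) = Suc (cnt \<sigma> i)"
proof -
  assume a: "1 \<le> i" "\<sigma> i < \<sigma> (Suc i)"
  have "{j. 1 \<le> j \<and> j < Suc i \<and> \<sigma> j < \<sigma> (Suc j)} = insert i {j. 1 \<le> j \<and> j < i \<and> \<sigma> j < \<sigma> (Suc j)}"
    using a by auto
  moreover have "finite {j. 1 \<le> j \<and> j < i \<and> \<sigma> j < \<sigma> (Suc j)}" by (rule finite_subset[of _ "{..<i}"]) auto
  ultimately show ?thesis unfolding cnt_def by simp
qed

lemma alone:
  assumes x: "1 \<le> x" "x \<le> n"
    and l: "x = 1 \<or> \<sigma> (x - 1) < \<sigma> x" and r: "x = n \<or> \<sigma> x < \<sigma> (Suc x)"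
  shows "column_boxes n \<sigma> (cnt \<sigma> x) = {x}"
proof -
  have "y = x" if y: "1 \<le> y" "y \<le> n" "cnt \<sigma> y = cnt \<sigma> x" for y
  proof (rule ccontr)
    assume ne: "y \<noteq> x"
    show False
    proof (cases "y < x")
      case True
      hence x1: "x \<noteq> 1" using y by auto
      hence as: "\<sigma> (x - 1) < \<sigma> x" using l by auto
      have "cnt \<sigma> (Suc (x - 1)) = Suc (cnt \<sigma> (x - 1))"
        using x1 x as by (intro cnt_Suc_asc) auto
      moreover have "Suc (x - 1) = x" using x1 x by simp
      moreover have "cnt \<sigma> y \<le> cnt \<sigma> (x - 1)" using True by (intro cnt_mono) simp
      ultimately show False using y by simp
    next
      case False
      hence "x < y" using ne by simp
      hence xn: "x \<noteq> n" using y by auto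
      hence as: "\<sigma> x < \<sigma> (Suc x)" using r by auto
      have "cnt \<sigma> (Suc x) = Suc (cnt \<sigma> x)" using x as by (intro cnt_Suc_asc) auto
      moreover have "cnt \<sigma> (Suc x) \<le> cnt \<sigma> y" using \<open>x < y\<close> by (intro cnt_mono) simp
      ultimately show False using y by simp
    qed
  qed
  thus ?thesis unfolding column_boxes_def cnt_fst using x by auto
qed

lemma hyps_consequences:
  assumes bij: "bij_betw \<sigma> {1..n} {1..n}"
    and h2: "card (ribbon_columns n \<sigma>) \<ge> 2"
    and h3: "\<forall>x\<in>ribbon_columns n \<sigma>. card (column_boxes n \<sigma> x) \<ge> 2"
  shows "\<exists>p. even p \<and> 2 \<le> p \<and> p < n \<and> (bb \<sigma> (p - 1) \<longleftrightarrow> bb \<sigma> p)"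
proof -
  have inj: "inj_on \<sigma> {1..n}" using bij by (rule bij_betw_imp_inj_on)
  have noalone: "\<not> ((x = 1 \<or> \<sigma> (x - 1) < \<sigma> x) \<and> (x = n \<or> \<sigma> x < \<sigma> (Suc x)))"
    if x: "1 \<le> x" "x \<le> n" for x
  proof
    assume a: "(x = 1 \<or> \<sigma> (x - 1) < \<sigma> x) \<and> (x = n \<or> \<sigma> x < \<sigma> (Suc x))"
    hence cb: "column_boxes n \<sigma> (cnt \<sigma> x) = {x}" using x by (intro alone) auto
    have "cnt \<sigma> x \<in> ribbon_columns n \<sigma>" unfolding ribbon_columns_def cnt_fst using x by auto
    hence "card (column_boxes n \<sigma> (cnt \<sigma> x)) \<ge> 2" using h3 by blast
    thus False using cb by simp
  qed
  have ex_asc: "\<exists>j. 1 \<le> j \<and> j < n \<and> \<sigma> j < \<sigma> (Suc j)"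
  proof (rule ccontr)
    assume "\<not> ?thesis"
    hence "\<And>i. i \<in> {1..n} \<Longrightarrow> cnt \<sigma> i = 0" unfolding cnt_def
      by (auto intro!: card_eq_0_iff[THEN iffD2] intro: disjI2) 
    hence "ribbon_columns n \<sigma> \<subseteq> {0}" unfolding ribbon_columns_def cnt_fst by auto
    hence "card (ribbon_columns n \<sigma>) \<le> 1" by (rule card_le1)
    thus False using h2 by simp
  qed
  then obtain j0 where j0: "1 \<le> j0" "j0 < n" "\<sigma> j0 < \<sigma> (Suc j0)" by blast
  have n2: "2 \<le> n" using j0 by simp
  have a1: "\<not> \<sigma> 1 < \<sigma> 2" using noalone[of 1] n2 by (simp add: numeral_2_eq_2)
  have an: "\<not> \<sigma> (n - 1) < \<sigma> n" using noalone[of n] n2 by simp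
  have aa: "\<not> (\<sigma> (x - 1) < \<sigma> x \<and> \<sigma> x < \<sigma> (Suc x))" if "2 \<le> x" "x < n" for x
    using noalone[of x] that by auto
  show ?thesis
  proof (rule ccontr)
    assume "\<not> ?thesis"
    hence sl: "\<And>p. even p \<Longrightarrow> 2 \<le> p \<Longrightarrow> p < n \<Longrightarrow> bb \<sigma> (p - 1) \<noteq> bb \<sigma> p" by blast
    have neq: "\<sigma> i \<noteq> \<sigma> (Suc i)" if "1 \<le> i" "i < n" for i
      using inj that by (auto dest: inj_onD)
    have sl2: "\<sigma> (p - 1) < \<sigma> p \<longleftrightarrow> \<sigma> p < \<sigma> (Suc p)" if "even p" "2 \<le> p" "p < n" for p
    proof -
      have "odd (p - 1)" using that by presburger
      moreover have "Suc (p - 1) = p" using that by simp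
      moreover note sl[OF that] neq[of p] that
      ultimately show ?thesis unfolding bb_def by auto
    qed
    have "\<forall>i. 1 \<le> i \<and> i < n \<longrightarrow> \<not> \<sigma> i < \<sigma> (Suc i)"
    proof (intro allI)
      fix i show "1 \<le> i \<and> i < n \<longrightarrow> \<not> \<sigma> i < \<sigma> (Suc i)"
      proof (induction i rule: less_induct)
        case (less i)
        show ?case
        proof (intro impI)
          assume i: "1 \<le> i \<and> i < n"
          show "\<not> \<sigma> i < \<sigma> (Suc i)"
          proof (cases "i = 1")
            case True thus ?thesis using a1 by (simp add: numeral_2_eq_2)
          next
            case i1: False
            show ?thesis
            proof (cases "even i")
              case True
              have "\<not> \<sigma> (i - 1) < \<sigma> (Suc (i - 1))" using less.IH[of "i - 1"] i i1 by auto
              moreover have "Suc (i - 1) = i" using i by simp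
              ultimately show ?thesis using sl2[of i] True i i1 by auto
            next
              case False
              show ?thesis
              proof (cases "Suc i < n")
                case True
                have "even (Suc i)" using False by simp
                hence "\<sigma> i < \<sigma> (Suc i) \<longleftrightarrow> \<sigma> (Suc i) < \<sigma> (Suc (Suc i))"
                  using sl2[of "Suc i"] True i by auto
                moreover have "\<not> (\<sigma> i < \<sigma> (Suc i) \<and> \<sigma> (Suc i) < \<sigma> (Suc (Suc i)))"
                  using aa[of "Suc i"] True i by auto
                ultimately show ?thesis by blast
              next
                case False
                hence "i = n - 1" using i by linarith
                thus ?thesis using an i by simp
              qed
            qed
          qed
        qed
      qed
    qed
    thus False using j0 by blast
  qed
qed



definition FX :: "nat \<Rightarrow> nat set \<Rightarrow> nat \<Rightarrow> nat \<Rightarrow> nat" where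
  "FX n X q = (\<lambda>i. if 1 \<le> i \<and> i \<le> n then (if i \<in> X then 1 else if i = q then 3 else 2) else 0)"

lemma FX_pos_ok:
  assumes "indep X" "\<And>i. 1 \<le> i \<Longrightarrow> i < n \<Longrightarrow> i \<in> X \<or> Suc i \<in> X \<or> i = q \<or> Suc i = q"
  shows "pos_ok n (FX n X q)"
  using assms unfolding pos_ok_def FX_def indep_def by auto

lemma FX_mult:
  assumes X: "X \<subseteq> {1..n}" and q: "q \<in> {1..n}" "q \<notin> X" and j: "j \<ge> 1"
  shows "pmult n (FX n X q) j = (if j = 1 then card X else if j = 3 then 1 else if j = 2 then n - card X - 1 else 0)"
proof -
  have fX: "finite X" using X finite_subset by blast
  have e1: "{i\<in>{1..n}. FX n X q i = 1} = X" using X q unfolding FX_def by auto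
  have e3: "{i\<in>{1..n}. FX n X q i = 3} = {q}" using X q unfolding FX_def by auto
  have e2: "{i\<in>{1..n}. FX n X q i = 2} = {1..n} - X - {q}" using X q unfolding FX_def by auto
  have e0: "j \<noteq> 1 \<Longrightarrow> j \<noteq> 2 \<Longrightarrow> j \<noteq> 3 \<Longrightarrow> {i\<in>{1..n}. FX n X q i = j} = {}" unfolding FX_def by auto
  have c2: "card ({1..n} - X - {q}) = n - card X - 1"
  proof -
    have "card ({1..n} - X) = n - card X" using X fX by (simp add: card_Diff_subset)
    moreover have "q \<in> {1..n} - X" using q by auto
    ultimately show ?thesis by (simp add: card_Diff_singleton)
  qed
  show ?thesis unfolding pmult_def using e1 e2 e3 e0 c2 by auto
qed


lemma card_ST:
  assumes "2*t \<le> n+1"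
  shows "card (ST n t) = t + (n div 2 - t)"
proof -
  let ?A = "(\<lambda>j. 2*j+1) ` {..<t}"
  let ?B = "(\<lambda>j. 2*j) ` {t+1..n div 2}"
  have eq: "ST n t = ?A \<union> ?B"
  proof
    show "ST n t \<subseteq> ?A \<union> ?B"
    proof
      fix x assume x: "x \<in> ST n t"
      hence x1: "1 \<le> x" "x \<le> n" and x2: "odd x \<and> x < 2*t \<or> even x \<and> 2*t+1 < x" unfolding ST_def by auto
      show "x \<in> ?A \<union> ?B"
      proof (cases "odd x")
        case True
        hence "x = 2*(x div 2)+1" "x div 2 < t" using x2 by presburger+
        thus ?thesis by blast
      next
        case False
        have "x = 2*(x div 2)" using False by simp
        moreover have "t+1 \<le> x div 2" using x2 False by presburger
        moreover have "x div 2 \<le> n div 2" using x1 by (simp add: div_le_mono)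
        ultimately show ?thesis by auto
      qed
    qed
    show "?A \<union> ?B \<subseteq> ST n t"
    proof
      fix x assume "x \<in> ?A \<union> ?B"
      thus "x \<in> ST n t"
      proof
        assume "x \<in> ?A"
        then obtain j where j: "j < t" "x = 2*j+1" by blast
        thus ?thesis using assms unfolding ST_def by auto
      next
        assume "x \<in> ?B"
        then obtain j where j: "t+1 \<le> j" "j \<le> n div 2" "x = 2*j" by auto
        hence "2*j \<le> n" by linarith
        thus ?thesis using j unfolding ST_def by auto
      qed
    qed
  qed
  have "card ?A = t" by (subst card_image) (auto simp: inj_on_def)
  moreover have "card ?B = n div 2 - t" by (subst card_image) (auto simp: inj_on_def)
  moreover have "?A \<inter> ?B = {}" by auto
  ultimately show ?thesis unfolding eq by (simp add: card_Un_disjoint)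
qed

lemma indep_ST: "indep (ST n t)"
  unfolding indep_def ST_def by auto


lemma NE_L1:
  assumes "even p" 
  shows "NE n (FX n (ST n ((n+1) div 2)) p) = {}"
  unfolding NE_def ff_def FX_def ST_def using assms by auto

lemma NE_L2:
  assumes "even n" "1 \<le> s" "2*s < n"
  shows "NE n (FX n (ST n s) (2*s+1)) = {i. 1 \<le> i \<and> i < n \<and> 2*s \<le> i}"
  unfolding NE_def ff_def FX_def ST_def using assms by auto


lemma ST_mem: "1 \<le> i \<Longrightarrow> i \<le> n \<Longrightarrow> i \<in> ST n t \<longleftrightarrow> (odd i \<and> i < 2*t \<or> even i \<and> 2*t+1 < i)"
  unfolding ST_def by simp

lemma ST_full: "1 \<le> i \<Longrightarrow> i \<le> n \<Longrightarrow> i \<in> ST n ((n+1) div 2) \<longleftrightarrow> odd i"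
proof -
  assume i: "1 \<le> i" "i \<le> n"
  have h1: "n \<le> 2 * ((n+1) div 2)" by presburger
  have h2: "odd i \<Longrightarrow> i < 2 * ((n+1) div 2)" using i by presburger
  show ?thesis using ST_mem[OF i, of "(n+1) div 2"] h1 h2 i by auto
qed



definition aM :: "nat \<Rightarrow> nat \<Rightarrow> nat" where
  "aM n j = (if j = 1 then 1 else if j = 2 then (n+1) div 2 else if j = 3 then n div 2 - 1 else 0)"

definition aL :: "nat \<Rightarrow> nat \<Rightarrow> nat" where
  "aL n j = (if j = 1 then (n+1) div 2 else if j = 2 then n div 2 - 1 else if j = 3 then 1 else 0)"

definition Q :: "nat \<Rightarrow> (nat \<Rightarrow> nat) \<Rightarrow> nat \<Rightarrow> bool" where
  "Q n \<sigma> s \<longleftrightarrow> card {i. 1 \<le> i \<and> i < n \<and> 2*s \<le> i} = 2 * card {i\<in>{i. 1 \<le> i \<and> i < n \<and> 2*s \<le> i}. bb \<sigma> i}"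

lemma L1_in:
  assumes inj: "inj_on \<sigma> {1..n}" and p: "even p" "2 \<le> p" "p \<le> n"
  shows "FX n (ST n ((n+1) div 2)) p \<in> DS n \<sigma> (AA n \<sigma>) (aL n)"
proof -
  let ?X = "ST n ((n+1) div 2)"
  let ?d = "FX n ?X p"
  have po: "pos_ok n ?d"
  proof (rule FX_pos_ok[OF indep_ST])
    fix i assume "1 \<le> i" "i < n"
    thus "i \<in> ?X \<or> Suc i \<in> ?X \<or> i = p \<or> Suc i = p"
      using ST_full[of i n] ST_full[of "Suc i" n] by auto
  qed
  have "pasc n \<sigma> ?d = AA n \<sigma>" using pasc_eq_AA_iff[OF inj po] NE_L1[OF p(1)] by simp
  moreover have "pmult n ?d j = aL n j" if "j \<ge> 1" for j
  proof -
    have X: "?X \<subseteq> {1..n}" by (rule ST_sub)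
    have q: "p \<in> {1..n}" "p \<notin> ?X" using p unfolding ST_def by auto
    have c: "card ?X = (n+1) div 2" using card_ST[of "(n+1) div 2" n] by simp
    show ?thesis using FX_mult[OF X q that] c unfolding aL_def by auto
  qed
  ultimately show ?thesis using po unfolding DS_def by auto
qed

lemma L2_in:
  assumes inj: "inj_on \<sigma> {1..n}" and n: "even n" and s: "1 \<le> s" "s < n div 2" and q: "Q n \<sigma> s"
  shows "FX n (ST n s) (2*s+1) \<in> DS n \<sigma> (AA n \<sigma>) (aL n)"
proof -
  let ?X = "ST n s"
  let ?d = "FX n ?X (2*s+1)"
  have po: "pos_ok n ?d"
  proof (rule FX_pos_ok[OF indep_ST])
    fix i assume "1 \<le> i" "i < n"
    hence "(odd i \<and> i < 2*s \<or> even i \<and> 2*s+1 < i) \<or> (odd (Suc i) \<and> Suc i < 2*s \<or> even (Suc i) \<and> 2*s+1 < Suc i) \<or> i = 2*s+1 \<or> Suc i = 2*s+1"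
      by presburger
    thus "i \<in> ?X \<or> Suc i \<in> ?X \<or> i = 2*s+1 \<or> Suc i = 2*s+1"
      using ST_mem[of i n s] ST_mem[of "Suc i" n s] \<open>1 \<le> i\<close> \<open>i < n\<close> by auto
  qed
  have s2: "2*s < n" using s n by presburger
  have "pasc n \<sigma> ?d = AA n \<sigma>" using pasc_eq_AA_iff[OF inj po] NE_L2[OF n s(1) s2] q unfolding Q_def by simp
  moreover have "pmult n ?d j = aL n j" if "j \<ge> 1" for j
  proof -
    have X: "?X \<subseteq> {1..n}" by (rule ST_sub)
    have qq: "2*s+1 \<in> {1..n}" "2*s+1 \<notin> ?X" using s2 unfolding ST_def by auto
    have c: "card ?X = n div 2" using card_ST[of s n] s n by simp
    have "n - n div 2 - 1 = n div 2 - 1" using n by presburger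
    moreover have "n div 2 = (n+1) div 2" using n by presburger
    ultimately show ?thesis using FX_mult[OF X qq that] c unfolding aL_def by auto
  qed
  ultimately show ?thesis using po unfolding DS_def by auto
qed


lemma finite_bounded: "finite {d::nat\<Rightarrow>nat. (\<forall>i. d i \<le> B) \<and> (\<forall>i. n < i \<longrightarrow> d i = 0)}"
proof -
  let ?A = "{d::nat\<Rightarrow>nat. (\<forall>i. d i \<le> B) \<and> (\<forall>i. n < i \<longrightarrow> d i = 0)}"
  let ?f = "\<lambda>d::nat\<Rightarrow>nat. map d [0..<Suc n]"
  have inj: "inj_on ?f ?A"
  proof (rule inj_onI)
    fix d d' assume d: "d \<in> ?A" and d': "d' \<in> ?A" and eq: "?f d = ?f d'"
    show "d = d'"
    proof
      fix i show "d i = d' i"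
      proof (cases "i \<le> n")
        case True
        hence il: "i < length [0..<Suc n]" by (simp del: upt_Suc)
        have "?f d ! i = ?f d' ! i" using eq by (simp only:)
        moreover have "?f d ! i = d i" using il by (simp del: upt_Suc)
        moreover have "?f d' ! i = d' i" using il by (simp del: upt_Suc)
        ultimately show ?thesis by simp
      next
        case False thus ?thesis using d d' by auto
      qed
    qed
  qed
  have "?f ` ?A \<subseteq> {xs. set xs \<subseteq> {..B} \<and> length xs = Suc n}" by auto
  hence "finite (?f ` ?A)" by (rule finite_subset) (rule finite_lists_length_eq, simp)
  thus ?thesis using finite_image_iff[OF inj] by simp
qed

lemma DS_finite:
  assumes a: "\<And>j. 4 \<le> j \<Longrightarrow> a j = 0"
  shows "finite (DS n \<sigma> k a)"
proof (rule finite_subset[OF _ finite_bounded[of 3 n]])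
  show "DS n \<sigma> k a \<subseteq> {d::nat\<Rightarrow>nat. (\<forall>i. d i \<le> 3) \<and> (\<forall>i. n < i \<longrightarrow> d i = 0)}"
  proof
    fix d assume d: "d \<in> DS n \<sigma> k a"
    have out: "\<And>i. i \<notin> {1..n} \<Longrightarrow> d i = 0" using d by (auto simp: DS_def pos_ok_def)
    have le: "d i \<le> 3" for i
    proof (rule ccontr)
      assume "\<not> d i \<le> 3"
      hence g: "4 \<le> d i" by simp
      hence "i \<in> {1..n}" using out by fastforce
      hence "{x\<in>{1..n}. d x = d i} \<noteq> {}" by blast
      hence "pmult n d (d i) \<noteq> 0" unfolding pmult_def by simp
      moreover have "pmult n d (d i) = a (d i)" using d g by (auto simp: DS_def)
      ultimately show False using a[OF g] by simp
    qed
    show "d \<in> {d::nat\<Rightarrow>nat. (\<forall>i. d i \<le> 3) \<and> (\<forall>i. n < i \<longrightarrow> d i = 0)}" using le out by auto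
  qed
qed


lemma FX_3_iff: "FX n X q i = 3 \<longleftrightarrow> 1 \<le> i \<and> i \<le> n \<and> i \<notin> X \<and> i = q"
  unfolding FX_def by auto

lemma lower_bound:
  assumes inj: "inj_on \<sigma> {1..n}"
  shows "card {p. even p \<and> 2 \<le> p \<and> p \<le> n} + (if even n then card {s. 1 \<le> s \<and> s < n div 2 \<and> Q n \<sigma> s} else 0)
         \<le> card (DS n \<sigma> (AA n \<sigma>) (aL n))"
proof -
  let ?h = "(n+1) div 2"
  define E where "E = {p. even p \<and> 2 \<le> p \<and> p \<le> n}"
  define T where "T = (if even n then {s. 1 \<le> s \<and> s < n div 2 \<and> Q n \<sigma> s} else {})"
  define f1 where "f1 = (\<lambda>p. FX n (ST n ?h) p)"
  define f2 where "f2 = (\<lambda>s. FX n (ST n s) (2*s+1))"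
  have fE: "finite E" unfolding E_def by (rule finite_subset[of _ "{..n}"]) auto
  have fT: "finite T" unfolding T_def by (rule finite_subset[of _ "{..n}"]) auto
  have sub: "f1 ` E \<union> f2 ` T \<subseteq> DS n \<sigma> (AA n \<sigma>) (aL n)"
  proof
    fix d assume "d \<in> f1 ` E \<union> f2 ` T"
    thus "d \<in> DS n \<sigma> (AA n \<sigma>) (aL n)"
    proof
      assume "d \<in> f1 ` E"
      then obtain p where "p \<in> E" "d = f1 p" by blast
      thus ?thesis unfolding E_def f1_def using L1_in[OF inj] by auto
    next
      assume "d \<in> f2 ` T"
      then obtain s where s: "s \<in> T" "d = f2 s" by blast
      hence "even n" unfolding T_def by (cases "even n") auto
      thus ?thesis using s unfolding T_def f2_def using L2_in[OF inj] by auto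
    qed
  qed
  have i1: "inj_on f1 E"
  proof (rule inj_onI)
    fix p p' assume p: "p \<in> E" and p': "p' \<in> E" and eq: "f1 p = f1 p'"
    have "f1 p p = 3" unfolding f1_def FX_3_iff using p unfolding E_def ST_def by auto
    hence "f1 p' p = 3" using eq by simp
    thus "p = p'" unfolding f1_def FX_3_iff by simp
  qed
  have i2: "inj_on f2 T"
  proof (rule inj_onI)
    fix s s' assume s: "s \<in> T" and s': "s' \<in> T" and eq: "f2 s = f2 s'"
    have n: "even n" using s unfolding T_def by (cases "even n") auto
    have "2*s+1 \<le> n" using s n unfolding T_def by auto
    hence "f2 s (2*s+1) = 3" unfolding f2_def FX_3_iff ST_def by auto
    hence "f2 s' (2*s+1) = 3" using eq by simp
    thus "s = s'" unfolding f2_def FX_3_iff by simp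
  qed
  have disj: "f1 ` E \<inter> f2 ` T = {}"
  proof (rule ccontr)
    assume "f1 ` E \<inter> f2 ` T \<noteq> {}"
    then obtain p s where p: "p \<in> E" and s: "s \<in> T" and eq: "f1 p = f2 s" by blast
    have n: "even n" using s unfolding T_def by (cases "even n") auto
    have "2*s+1 \<le> n" using s n unfolding T_def by auto
    hence "f2 s (2*s+1) = 3" unfolding f2_def FX_3_iff ST_def by auto
    hence "f1 p (2*s+1) = 3" using eq by simp
    hence "2*s+1 \<notin> ST n ?h" "2*s+1 \<le> n" unfolding f1_def FX_3_iff by auto
    thus False unfolding ST_def by auto presburger
  qed
  have "card (f1 ` E \<union> f2 ` T) = card E + card T"
    using card_Un_disjoint[OF finite_imageI[OF fE] finite_imageI[OF fT] disj]
      card_image[OF i1] card_image[OF i2] by simp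
  moreover have "card (f1 ` E \<union> f2 ` T) \<le> card (DS n \<sigma> (AA n \<sigma>) (aL n))"
    by (rule card_mono[OF DS_finite sub]) (simp add: aL_def)
  ultimately show ?thesis unfolding E_def T_def by (cases "even n") auto
qed



definition GX :: "nat \<Rightarrow> nat set \<Rightarrow> nat \<Rightarrow> nat \<Rightarrow> nat" where
  "GX n X q = (\<lambda>i. if 1 \<le> i \<and> i \<le> n then (if i \<in> X then 2 else if i = q then 1 else 3) else 0)"

lemma GX_in: "1 \<le> i \<Longrightarrow> i \<le> n \<Longrightarrow> GX n X q i = (if i \<in> X then 2 else if i = q then 1 else 3)"
  unfolding GX_def by simp

lemma NE_G1:
  assumes p: "even p" "2 \<le> p" "p \<le> n"
  shows "NE n (GX n (ST n ((n+1) div 2)) p) = {i. 1 \<le> i \<and> i < n \<and> (i = p \<or> Suc i = p)}"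
proof (rule set_eqI)
  fix i
  let ?d = "GX n (ST n ((n+1) div 2)) p"
  show "i \<in> NE n ?d \<longleftrightarrow> i \<in> {i. 1 \<le> i \<and> i < n \<and> (i = p \<or> Suc i = p)}"
  proof (cases "1 \<le> i \<and> i < n")
    case True
    have v1: "?d i = (if odd i then 2 else if i = p then 1 else 3)"
      using True GX_in[of i n] ST_full[of i n] by simp
    have v2: "?d (Suc i) = (if odd (Suc i) then 2 else if Suc i = p then 1 else 3)"
      using True GX_in[of "Suc i" n] ST_full[of "Suc i" n] by simp
    show ?thesis
    proof (cases "odd i")
      case True
      hence "i \<noteq> p" using p by auto
      thus ?thesis using \<open>1 \<le> i \<and> i < n\<close> True v1 v2 unfolding NE_def ff_def by auto
    next
      case False
      hence "Suc i \<noteq> p" using p by auto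
      thus ?thesis using \<open>1 \<le> i \<and> i < n\<close> False v1 v2 unfolding NE_def ff_def by auto
    qed
  next
    case False thus ?thesis unfolding NE_def by auto
  qed
qed


lemma NE_G3:
  assumes n: "even n" "2*t+1 < n"
  shows "NE n (GX n (ST n t) (2*t+1)) = {i. 1 \<le> i \<and> i < n \<and> 2*(t+1) \<le> i}"
proof (rule set_eqI)
  fix i
  let ?d = "GX n (ST n t) (2*t+1)"
  show "i \<in> NE n ?d \<longleftrightarrow> i \<in> {i. 1 \<le> i \<and> i < n \<and> 2*(t+1) \<le> i}"
  proof (cases "1 \<le> i \<and> i < n")
    case True
    have v1: "?d i = (if (odd i \<and> i < 2*t \<or> even i \<and> 2*t+1 < i) then 2 else if i = 2*t+1 then 1 else 3)"
      using True GX_in[of i n] ST_mem[of i n t] by simp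
    have v2: "?d (Suc i) = (if (odd (Suc i) \<and> Suc i < 2*t \<or> even (Suc i) \<and> 2*t+1 < Suc i) then 2 else if Suc i = 2*t+1 then 1 else 3)"
      using True GX_in[of "Suc i" n] ST_mem[of "Suc i" n t] by simp
    have "\<not> ff ?d i \<longleftrightarrow> 2*(t+1) \<le> i"
      unfolding ff_def v1 v2 by presburger
    thus ?thesis using True unfolding NE_def by auto
  next
    case False thus ?thesis unfolding NE_def by auto
  qed
qed


lemma NE_G2:
  assumes n: "even n" "odd p" "3 \<le> p" "p < n"
  shows "NE n (GX n (ST n 0) p) = {i. 1 \<le> i \<and> i < n \<and> i \<noteq> p - 1 \<and> i \<noteq> p}"
proof (rule set_eqI)
  fix i
  let ?d = "GX n (ST n 0) p"
  show "i \<in> NE n ?d \<longleftrightarrow> i \<in> {i. 1 \<le> i \<and> i < n \<and> i \<noteq> p - 1 \<and> i \<noteq> p}"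
  proof (cases "1 \<le> i \<and> i < n")
    case True
    have v1: "?d i = (if (odd i \<and> i < 2*0 \<or> even i \<and> 2*0+1 < i) then 2 else if i = p then 1 else 3)"
      using True GX_in[of i n] ST_mem[of i n 0] by simp
    have v2: "?d (Suc i) = (if (odd (Suc i) \<and> Suc i < 2*0 \<or> even (Suc i) \<and> 2*0+1 < Suc i) then 2 else if Suc i = p then 1 else 3)"
      using True GX_in[of "Suc i" n] ST_mem[of "Suc i" n 0] by simp
    have "\<not> ff ?d i \<longleftrightarrow> i \<noteq> p - 1 \<and> i \<noteq> p"
      unfolding ff_def v1 v2 using n True by presburger
    thus ?thesis using True unfolding NE_def by auto
  next
    case False thus ?thesis unfolding NE_def by auto
  qed
qed

lemma NE_Mix:
  assumes n: "even n" "1 \<le> t" "2*t+1 < n"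
  shows "NE n (GX n (ST n t) (2*t)) = {i. 1 \<le> i \<and> i < n \<and> 2*t - 1 \<le> i}"
proof (rule set_eqI)
  fix i
  let ?d = "GX n (ST n t) (2*t)"
  show "i \<in> NE n ?d \<longleftrightarrow> i \<in> {i. 1 \<le> i \<and> i < n \<and> 2*t - 1 \<le> i}"
  proof (cases "1 \<le> i \<and> i < n")
    case True
    have v1: "?d i = (if (odd i \<and> i < 2*t \<or> even i \<and> 2*t+1 < i) then 2 else if i = 2*t then 1 else 3)"
      using True GX_in[of i n] ST_mem[of i n t] by simp
    have v2: "?d (Suc i) = (if (odd (Suc i) \<and> Suc i < 2*t \<or> even (Suc i) \<and> 2*t+1 < Suc i) then 2 else if Suc i = 2*t then 1 else 3)"
      using True GX_in[of "Suc i" n] ST_mem[of "Suc i" n t] by simp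
    have "\<not> ff ?d i \<longleftrightarrow> 2*t - 1 \<le> i"
      unfolding ff_def v1 v2 using n True by presburger
    thus ?thesis using True unfolding NE_def by auto
  next
    case False thus ?thesis unfolding NE_def by auto
  qed
qed


lemma M_form:
  assumes d: "d \<in> DS n \<sigma> k (aM n)"
  shows "\<exists>t p. t \<le> (n+1) div 2 \<and> (odd n \<longrightarrow> t = (n+1) div 2) \<and> p \<in> {1..n} \<and> p \<notin> ST n t
            \<and> d = GX n (ST n t) p"
proof -
  have po: "pos_ok n d" and mult: "\<And>j. j \<ge> 1 \<Longrightarrow> pmult n d j = aM n j" using d by (auto simp: DS_def)
  have out: "\<And>i. i \<notin> {1..n} \<Longrightarrow> d i = 0" using po by (auto simp: pos_ok_def)
  have vals: "d i = 1 \<or> d i = 2 \<or> d i = 3" if i: "i \<in> {1..n}" for i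
  proof (rule ccontr)
    assume a: "\<not> (d i = 1 \<or> d i = 2 \<or> d i = 3)"
    have "d i \<ge> 1" using po i by (auto simp: pos_ok_def)
    hence g: "d i \<ge> 4" using a by simp
    have "{x\<in>{1..n}. d x = d i} \<noteq> {}" using i by blast
    hence "pmult n d (d i) \<noteq> 0" unfolding pmult_def by simp
    moreover have "pmult n d (d i) = 0" using mult[of "d i"] g by (simp add: aM_def)
    ultimately show False by simp
  qed
  define S where "S = {i\<in>{1..n}. d i = 2}"
  have Ssub: "S \<subseteq> {1..n}" unfolding S_def by auto
  have cS: "card S = (n+1) div 2" using mult[of 2] unfolding S_def pmult_def aM_def by simp
  have indS: "indep S"
    unfolding indep_def
  proof (intro allI impI)
    fix i assume "i \<in> S"
    show "Suc i \<notin> S"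
    proof
      assume "Suc i \<in> S"
      hence "1 \<le> i" "i < n" "d i = d (Suc i)" using \<open>i \<in> S\<close> unfolding S_def by auto
      thus False using po unfolding pos_ok_def by blast
    qed
  qed
  obtain t where t: "t \<le> (n+1) div 2" "odd n \<longrightarrow> t = (n+1) div 2" "S = ST n t"
    using indep_class[OF Ssub indS cS] by blast
  have "card {i\<in>{1..n}. d i = 1} = 1" using mult[of 1] unfolding pmult_def aM_def by simp
  then obtain p where P: "{i\<in>{1..n}. d i = 1} = {p}" by (rule card_1_singletonE)
  have p: "p \<in> {1..n}" "d p = 1" using P by auto
  have pS: "p \<notin> ST n t"
  proof
    assume "p \<in> ST n t" hence "p \<in> S" using t(3) by simp
    hence "d p = 2" unfolding S_def by simp
    thus False using p by simp
  qed
  have "d = GX n (ST n t) p"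
  proof
    fix i show "d i = GX n (ST n t) p i"
    proof (cases "i \<in> {1..n}")
      case True
      show ?thesis
      proof (cases "i \<in> ST n t")
        case True thus ?thesis using \<open>i \<in> {1..n}\<close> t(3) unfolding S_def GX_def by auto
      next
        case False
        hence d2: "d i \<noteq> 2" using \<open>i \<in> {1..n}\<close> t(3) unfolding S_def by auto
        show ?thesis
        proof (cases "i = p")
          case True thus ?thesis using p False unfolding GX_def by auto
        next
          case ip: False
          hence "d i \<noteq> 1" using P \<open>i \<in> {1..n}\<close> by auto
          hence "d i = 3" using vals[OF \<open>i \<in> {1..n}\<close>] d2 by auto
          thus ?thesis using \<open>i \<in> {1..n}\<close> False ip unfolding GX_def by auto
        qed
      qed
    next
      case False thus ?thesis using out[OF False] unfolding GX_def by auto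
    qed
  qed
  thus ?thesis using t(1,2) p(1) pS by blast
qed


lemma M_cases:
  assumes inj: "inj_on \<sigma> {1..n}" and d: "d \<in> DS n \<sigma> (AA n \<sigma>) (aM n)"
  shows "(\<exists>p. even p \<and> 2 \<le> p \<and> p < n \<and> (bb \<sigma> (p-1) \<noteq> bb \<sigma> p) \<and> d = GX n (ST n ((n+1) div 2)) p)
       \<or> (even n \<and> (\<exists>t. t < n div 2 \<and> Q n \<sigma> (t+1) \<and> d = GX n (ST n t) (2*t+1)))"
proof -
  have po: "pos_ok n d" and pa: "pasc n \<sigma> d = AA n \<sigma>" using d by (auto simp: DS_def)
  have eqNE: "card (NE n d) = 2 * card {i\<in>NE n d. bb \<sigma> i}" by (rule pasc_eq_AA[OF inj po pa])
  obtain t p where t: "t \<le> (n+1) div 2" "odd n \<longrightarrow> t = (n+1) div 2" and p: "p \<in> {1..n}" "p \<notin> ST n t"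
    and dG: "d = GX n (ST n t) p"
    using M_form[OF d] by blast
  show ?thesis
  proof (cases "t = (n+1) div 2")
    case True
    have pe: "even p" using p True ST_full[of p n] by auto
    have p1: "1 \<le> p" using p by simp
    have p2: "2 \<le> p" using pe p1 by presburger
    have NEe: "NE n d = {i. 1 \<le> i \<and> i < n \<and> (i = p \<or> Suc i = p)}"
      unfolding dG True using NE_G1[OF pe p2] p by auto
    show ?thesis
    proof (cases "p = n")
      case True
      hence "NE n d = {n - 1}" unfolding NEe using p2 by auto
      hence "card (NE n d) = 1" by simp
      thus ?thesis using eqNE by presburger
    next
      case False
      hence pn: "p < n" using p by auto
      hence NE2: "NE n d = {p - 1, p}" unfolding NEe using p2 by auto
      have "bb \<sigma> (p-1) \<noteq> bb \<sigma> p"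
      proof
        assume eq: "bb \<sigma> (p-1) = bb \<sigma> p"
        have ne: "p - 1 \<noteq> p" using p2 by simp
        show False
        proof (cases "bb \<sigma> p")
          case True
          hence "{i\<in>NE n d. bb \<sigma> i} = {p-1, p}" unfolding NE2 using eq by auto
          hence "card {i\<in>NE n d. bb \<sigma> i} = 2" using ne by simp
          moreover have "card (NE n d) = 2" using NE2 ne by simp
          ultimately show False using eqNE by simp
        next
          case False
          hence "{i\<in>NE n d. bb \<sigma> i} = {}" unfolding NE2 using eq by auto
          hence "card {i\<in>NE n d. bb \<sigma> i} = 0" by (simp only: card.empty)
          moreover have "card (NE n d) = 2" using NE2 ne by simp
          ultimately show False using eqNE by simp
        qed
      qed
      thus ?thesis using pe p2 pn dG True by blast
    qed
  next
    case False
    hence tl: "t < (n+1) div 2" using t(1) by simp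
    have ev: "even n" using t(2) False by blast
    have tm: "t < n div 2" using tl ev by presburger
    have t2: "2*t+1 < n" using tm ev by presburger
    show ?thesis
    proof (cases "p = 2*t+1")
      case True
      have "NE n d = {i. 1 \<le> i \<and> i < n \<and> 2*(t+1) \<le> i}" unfolding dG True by (rule NE_G3[OF ev t2])
      hence "Q n \<sigma> (t+1)" using eqNE unfolding Q_def by simp
      thus ?thesis using ev tm dG True by blast
    next
      case pne: False
      show ?thesis
      proof (cases "t = 0")
        case True
        have po': "odd p" using p True ST_mem[of p n 0] by auto
        have p1: "1 \<le> p" "p \<le> n" using p by auto
        have p3: "3 \<le> p" using po' pne True p1 by presburger
        have pn: "p < n" using po' ev p1 by presburger
        have "NE n d = {i. 1 \<le> i \<and> i < n \<and> i \<noteq> p - 1 \<and> i \<noteq> p}"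
          unfolding dG True by (rule NE_G2[OF ev po' p3 pn])
        also have "\<dots> = {1..<n} - {p - 1, p}" by auto
        finally have e: "NE n d = {1..<n} - {p - 1, p}" .
        have sub: "{p - 1, p} \<subseteq> {1..<n}" using p3 pn by auto
        have c2: "card {p - 1, p} = 2" using p3 by simp
        have "card (NE n d) = card {1..<n} - card {p - 1, p}"
          unfolding e by (rule card_Diff_subset[OF _ sub]) simp
        hence "card (NE n d) = (n - 1) - 2" using c2 by simp
        thus ?thesis using eqNE ev p3 pn by presburger
      next
        case t0: False
        have gap1: "2*t \<in> {1..n}" "2*t \<notin> ST n t" using t0 t2 unfolding ST_def by auto
        have gap2: "2*t+1 \<in> {1..n}" "2*t+1 \<notin> ST n t" using t2 unfolding ST_def by auto
        have "d (2*t) \<noteq> d (Suc (2*t))" using po gap1 t2 unfolding pos_ok_def by auto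
        hence "p = 2*t" using gap1 gap2 pne unfolding dG GX_def by (auto split: if_splits)
        hence "NE n d = {i. 1 \<le> i \<and> i < n \<and> 2*t - 1 \<le> i}" 
          unfolding dG using NE_Mix[OF ev _ t2] t0 by simp
        also have "\<dots> = {2*t - 1..<n}" using t0 by auto
        finally have "card (NE n d) = n - (2*t - 1)" by simp
        thus ?thesis using eqNE ev t0 t2 by presburger
      qed
    qed
  qed
qed


lemma upper_bound:
  assumes inj: "inj_on \<sigma> {1..n}"
  shows "card (DS n \<sigma> (AA n \<sigma>) (aM n)) \<le>
    card {p. even p \<and> 2 \<le> p \<and> p < n \<and> bb \<sigma> (p-1) \<noteq> bb \<sigma> p}
    + (if even n then card {t. t < n div 2 \<and> Q n \<sigma> (t+1)} else 0)"
proof -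
  define SL where "SL = {p. even p \<and> 2 \<le> p \<and> p < n \<and> bb \<sigma> (p-1) \<noteq> bb \<sigma> p}"
  define T where "T = (if even n then {t. t < n div 2 \<and> Q n \<sigma> (t+1)} else {})"
  define g1 where "g1 = (\<lambda>p. GX n (ST n ((n+1) div 2)) p)"
  define g3 where "g3 = (\<lambda>t. GX n (ST n t) (2*t+1))"
  have fSL: "finite SL" unfolding SL_def by (rule finite_subset[of _ "{..n}"]) auto
  have fT: "finite T" unfolding T_def by (rule finite_subset[of _ "{..n}"]) auto
  have sub: "DS n \<sigma> (AA n \<sigma>) (aM n) \<subseteq> g1 ` SL \<union> g3 ` T"
  proof
    fix d assume d: "d \<in> DS n \<sigma> (AA n \<sigma>) (aM n)"
    from M_cases[OF inj d] show "d \<in> g1 ` SL \<union> g3 ` T"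
    proof (elim disjE exE conjE)
      fix p assume "even p" "2 \<le> p" "p < n" "bb \<sigma> (p-1) \<noteq> bb \<sigma> p" "d = GX n (ST n ((n+1) div 2)) p"
      hence "p \<in> SL" "d = g1 p" unfolding SL_def g1_def by auto
      thus ?thesis by blast
    next
      fix t assume "even n" "t < n div 2" "Q n \<sigma> (t+1)" "d = GX n (ST n t) (2*t+1)"
      hence "t \<in> T" "d = g3 t" unfolding T_def g3_def by auto
      thus ?thesis by blast
    qed
  qed
  have "card (DS n \<sigma> (AA n \<sigma>) (aM n)) \<le> card (g1 ` SL \<union> g3 ` T)"
    by (rule card_mono[OF _ sub]) (simp add: fSL fT)
  also have "\<dots> \<le> card (g1 ` SL) + card (g3 ` T)" by (rule card_Un_le)
  also have "\<dots> \<le> card SL + card T" by (intro add_mono card_image_le fSL fT)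
  finally show ?thesis unfolding SL_def T_def by (cases "even n") auto
qed



definition cyc :: "nat \<Rightarrow> nat" where
  "cyc j = (if j = 1 then 2 else if j = 2 then 3 else if j = 3 then 1 else j)"

lemma cyc_bij: "bij_betw cyc {1..} {1..}"
proof (rule bij_betw_byWitness[where f' = "\<lambda>j::nat. if j = 1 then 3 else if j = 2 then 1 else if j = 3 then 2 else j"])
  show "\<forall>a\<in>{1..}. (if cyc a = 1 then 3 else if cyc a = 2 then 1 else if cyc a = 3 then 2 else cyc a) = a"
    unfolding cyc_def by auto
  show "\<forall>a'\<in>{1..}. cyc (if a' = 1 then 3 else if a' = 2 then 1 else if a' = 3 then 2 else a') = a'"
    unfolding cyc_def by auto
  show "cyc ` {1..} \<subseteq> {1..}" unfolding cyc_def by auto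
  show "(\<lambda>j::nat. if j = 1 then 3 else if j = 2 then 1 else if j = 3 then 2 else j) ` {1..} \<subseteq> {1..}" by auto
qed

lemma aM_cyc: "(\<lambda>j. aM n (cyc j)) = aL n"
  unfolding aM_def aL_def cyc_def by (rule ext) auto

lemma card_Ele: "card {p::nat. even p \<and> 2 \<le> p \<and> p \<le> n} = n div 2"
proof -
  have "{p::nat. even p \<and> 2 \<le> p \<and> p \<le> n} = (\<lambda>j. 2*j) ` {1..n div 2}"
  proof (rule set_eqI)
    fix x
    have "x \<in> (\<lambda>j. 2*j) ` {1..n div 2} \<longleftrightarrow> (\<exists>j. 1 \<le> j \<and> j \<le> n div 2 \<and> x = 2*j)" by auto
    moreover have "(even x \<and> 2 \<le> x \<and> x \<le> n) \<longleftrightarrow> (\<exists>j. 1 \<le> j \<and> j \<le> n div 2 \<and> x = 2*j)" by presburger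
    ultimately show "x \<in> {p. even p \<and> 2 \<le> p \<and> p \<le> n} \<longleftrightarrow> x \<in> (\<lambda>j. 2*j) ` {1..n div 2}" by simp
  qed
  moreover have "inj_on (\<lambda>j::nat. 2*j) {1..n div 2}" by (auto simp: inj_on_def)
  ultimately show ?thesis by (simp add: card_image)
qed

theorem corollary4p4:
  fixes n :: nat and \<sigma> :: "nat \<Rightarrow> nat"
  assumes "labeled_path n \<sigma>"
    and "card (ribbon_columns n \<sigma>) \<ge> 2"
    and "\<forall>x\<in>ribbon_columns n \<sigma>. card (column_boxes n \<sigma> x) \<ge> 2"
  shows "\<not> cqf_symmetric n \<sigma>"
proof
  assume sym: "cqf_symmetric n \<sigma>"
  have bij: "bij_betw \<sigma> {1..n} {1..n}" using assms(1) unfolding labeled_path_def .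
  have inj: "inj_on \<sigma> {1..n}" using bij by (rule bij_betw_imp_inj_on)
  obtain p0 where p0: "even p0" "2 \<le> p0" "p0 < n" "bb \<sigma> (p0 - 1) \<longleftrightarrow> bb \<sigma> p0"
    using hyps_consequences[OF bij assms(2) assms(3)] by blast
  have "cqf_coeff n \<sigma> (AA n \<sigma>) (\<lambda>j. aM n (cyc j)) = cqf_coeff n \<sigma> (AA n \<sigma>) (aM n)"
    using sym cyc_bij unfolding cqf_symmetric_def by blast
  hence eq: "card (DS n \<sigma> (AA n \<sigma>) (aL n)) = card (DS n \<sigma> (AA n \<sigma>) (aM n))"
    unfolding aM_cyc transfer[OF bij] .
  define EV where "EV = {p::nat. even p \<and> 2 \<le> p \<and> p < n}"
  define SL where "SL = {p. even p \<and> 2 \<le> p \<and> p < n \<and> bb \<sigma> (p-1) \<noteq> bb \<sigma> p}"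
  define Ele where "Ele = {p::nat. even p \<and> 2 \<le> p \<and> p \<le> n}"
  define T1 where "T1 = {t. t < n div 2 \<and> Q n \<sigma> (t+1)}"
  define T2 where "T2 = {s. 1 \<le> s \<and> s < n div 2 \<and> Q n \<sigma> s}"
  have fEV: "finite EV" unfolding EV_def by (rule finite_subset[of _ "{..n}"]) auto
  have "SL \<subset> EV" using p0 unfolding SL_def EV_def by auto
  hence cSL: "card SL < card EV" using fEV by (rule psubset_card_mono[rotated])
  have cEle: "card Ele = n div 2" unfolding Ele_def by (rule card_Ele)
  have low: "card Ele + (if even n then card T2 else 0) \<le> card (DS n \<sigma> (AA n \<sigma>) (aL n))"
    using lower_bound[OF inj] unfolding Ele_def T2_def .
  have up: "card (DS n \<sigma> (AA n \<sigma>) (aM n)) \<le> card SL + (if even n then card T1 else 0)"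
    using upper_bound[OF inj] unfolding SL_def T1_def .
  show False
  proof (cases "even n")
    case True
    have "Ele = insert n EV" unfolding Ele_def EV_def using True p0 by auto
    moreover have "n \<notin> EV" unfolding EV_def by auto
    ultimately have "card Ele = card EV + 1" using fEV by simp
    hence cEV: "card EV + 1 = n div 2" using cEle by simp
    have "T1 \<subseteq> (\<lambda>s. s - 1) ` insert (n div 2) T2"
    proof
      fix t assume t: "t \<in> T1"
      show "t \<in> (\<lambda>s. s - 1) ` insert (n div 2) T2"
      proof (cases "t + 1 < n div 2")
        case True
        hence "t + 1 \<in> T2" using t unfolding T1_def T2_def by auto
        thus ?thesis by force
      next
        case False
        hence "t + 1 = n div 2" using t unfolding T1_def by auto
        thus ?thesis by force
      qed
    qed
    moreover have "finite T2" unfolding T2_def by (rule finite_subset[of _ "{..n}"]) auto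
    ultimately have "card T1 \<le> card T2 + 1"
    proof -
      assume s: "T1 \<subseteq> (\<lambda>s. s - 1) ` insert (n div 2) T2" and f: "finite T2"
      have "card T1 \<le> card ((\<lambda>s. s - 1) ` insert (n div 2) T2)"
        by (rule card_mono[OF _ s]) (simp add: f)
      also have "\<dots> \<le> card (insert (n div 2) T2)" by (rule card_image_le) (simp add: f)
      also have "\<dots> \<le> card T2 + 1" using f by (simp add: card_insert_if)
      finally show ?thesis .
    qed
    thus False using eq low up cSL cEV cEle True by simp
  next
    case False
    have "Ele = EV" unfolding Ele_def EV_def using False by auto presburger
    thus False using eq low up cSL cEle False by simp
  qed
qed


end
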